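(* Let $k\ge 0$ and $n\ge 1$ be integers, and let $x=(x_1,x_2)$ and $y=(y_1,y_2)$ be distinct points of $\mathbb{Z}^2$ with $|x_1-y_1|<n-2k$ and $|x_2-y_2|<n-2k$. Then \[\pi_n\big(B_{\mathbb{Z}^2}[x,k]\cap B_{\mathbb{Z}^2}[y,k]\big)=\pi_n\big(B_{\mathbb{Z}^2}[x,k]\big)\cap\pi_n\big(B_{\mathbb{Z}^2}[y,k]\big).\]
   Context: $\mathbb{Z}^2$ carries the $l^1$ metric $d((a,b),(a',b'))=|a-a'|+|b-b'|$, and $B_{\mathbb{Z}^2}[x,k]=\{z\in\mathbb{Z}^2: d(x,z)\le k\}$. $\pi_n:\mathbb{Z}^2\to\mathbb{Z}^2/(n\mathbb{Z}\times n\mathbb{Z})$ is the quotient map reducing both coordinates mod $n$. *)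

theory Defs
  imports Main
begin

definition l1dist :: "int \<times> int \<Rightarrow> int \<times> int \<Rightarrow> int" where
  "l1dist p q = \<bar>fst p - fst q\<bar> + \<bar>snd p - snd q\<bar>"

definition ballZ2 :: "int \<times> int \<Rightarrow> int \<Rightarrow> (int \<times> int) set" where
  "ballZ2 x k = {z. l1dist x z \<le> k}"

text \<open>Quotient map Z^2 \<rightarrow> Z^2/(nZ \<times> nZ); a class is represented by the pair of
  canonical residues in {0..n-1}.\<close>
definition pi_n :: "int \<Rightarrow> int \<times> int \<Rightarrow> int \<times> int" where
  "pi_n n p = (fst p mod n, snd p mod n)"

end

theory Submission
  imports Defs
begin

lemma modeq_close:
  fixes a b n :: int
  assumes "n \<ge> 1" "a mod n = b mod n" "\<bar>a - b\<bar> < n"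
  shows "a = b"
proof -
  have "n dvd (a - b)" using assms(2) by (simp add: mod_eq_dvd_iff)
  then obtain c where c: "a - b = n * c" by blast
  have "c = 0"
  proof (rule ccontr)
    assume "c \<noteq> 0"
    then have "\<bar>c\<bar> \<ge> 1" by simp
    then have "\<bar>n * c\<bar> \<ge> n" using assms(1) by (simp add: abs_mult mult_le_cancel_left1)
    then show False using assms(3) c by simp
  qed
  then show ?thesis using c by simp
qed

theorem lemma5p4:
  fixes k n :: int and x y :: "int \<times> int"
  assumes "k \<ge> 0" and "n \<ge> 1" and "x \<noteq> y"
    and "\<bar>fst x - fst y\<bar> < n - 2 * k"
    and "\<bar>snd x - snd y\<bar> < n - 2 * k"
  shows "pi_n n ` (ballZ2 x k \<inter> ballZ2 y k) = pi_n n ` ballZ2 x k \<inter> pi_n n ` ballZ2 y k"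
proof
  show "pi_n n ` (ballZ2 x k \<inter> ballZ2 y k) \<subseteq> pi_n n ` ballZ2 x k \<inter> pi_n n ` ballZ2 y k"
    by blast
next
  show "pi_n n ` ballZ2 x k \<inter> pi_n n ` ballZ2 y k \<subseteq> pi_n n ` (ballZ2 x k \<inter> ballZ2 y k)"
  proof
    fix p assume "p \<in> pi_n n ` ballZ2 x k \<inter> pi_n n ` ballZ2 y k"
    then obtain a b where a: "a \<in> ballZ2 x k" and b: "b \<in> ballZ2 y k"
      and pa: "p = pi_n n a" and pb: "p = pi_n n b" by blast
    have da: "\<bar>fst x - fst a\<bar> + \<bar>snd x - snd a\<bar> \<le> k"
      using a by (simp add: ballZ2_def l1dist_def)
    have db: "\<bar>fst y - fst b\<bar> + \<bar>snd y - snd b\<bar> \<le> k"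
      using b by (simp add: ballZ2_def l1dist_def)
    have m1: "fst a mod n = fst b mod n" and m2: "snd a mod n = snd b mod n"
      using pa pb by (simp_all add: pi_n_def)
    have "\<bar>fst a - fst b\<bar> < n" using da db assms(4) by linarith
    then have e1: "fst a = fst b" using modeq_close[OF assms(2) m1] by simp
    have "\<bar>snd a - snd b\<bar> < n" using da db assms(5) by linarith
    then have e2: "snd a = snd b" using modeq_close[OF assms(2) m2] by simp
    have "a = b" using e1 e2 by (simp add: prod_eq_iff)
    then show "p \<in> pi_n n ` (ballZ2 x k \<inter> ballZ2 y k)" using a b pa by blast
  qed
qed

end
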